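(* Assume that for every $A\in\mathcal B(E)$, $m(A)>0$ implies $R1_A(x)>0$ for $m$-a.e. $x$. Let $\nu\in\mathcal M(E)$ with $\nu\ll m$, and let $A\in\mathcal B(E)$ with $m(A)>0$. Then there exist $t_0>0$ and $B\in\mathcal B(E)$ with $\nu(B)>0$ such that $\inf_{x\in B}p_{t_0}(x,A)>0$.
   Context: $(E,\mathcal B(E),m)$ is a $\sigma$-finite measure space; $\mathcal M(E)$ the probability measures on it. $p_t(x,\cdot)$, $t\ge0$, is a transition probability function (probability measures, jointly measurable in $(t,x)$, $p_0(x,A)=1_A(x)$); $p_tf(x)=\int f\,dp_t(x,\cdot)$; $Rf(x)=\int_0^\infty e^{-t}p_tf(x)\,dt$. *)

theory Defs
  imports "HOL-Probability.Probability"
begin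

definition transition_prob :: "'a measure \<Rightarrow> (real \<Rightarrow> 'a \<Rightarrow> 'a measure) \<Rightarrow> bool" where
  "transition_prob M p \<longleftrightarrow>
     (\<forall>t\<ge>0. \<forall>x\<in>space M. prob_space (p t x) \<and> sets (p t x) = sets M) \<and>
     (\<forall>A\<in>sets M. (\<lambda>(t,x). measure (p t x) A)
         \<in> borel_measurable (restrict_space borel {0..} \<Otimes>\<^sub>M M)) \<and>
     (\<forall>x\<in>space M. \<forall>A\<in>sets M. measure (p 0 x) A = indicator A x)"

definition resolvent_ind :: "(real \<Rightarrow> 'a \<Rightarrow> 'a measure) \<Rightarrow> 'a set \<Rightarrow> 'a \<Rightarrow> real" where
  "resolvent_ind p A x = (LINT t:{0..}|lborel. exp (- t) * measure (p t x) A)"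

end

theory Submission
  imports Defs
begin

theorem lemma4p1:
  fixes M :: "'a measure" and p :: "real \<Rightarrow> 'a \<Rightarrow> 'a measure"
    and nu :: "'a measure" and A :: "'a set"
  assumes "sigma_finite_measure M"
    and "transition_prob M p"
    and "\<forall>C\<in>sets M. emeasure M C > 0 \<longrightarrow> (AE x in M. resolvent_ind p C x > 0)"
    and "prob_space nu" and "sets nu = sets M" and "absolutely_continuous M nu"
    and "A \<in> sets M" and "emeasure M A > 0"
  shows "\<exists>t0>0. \<exists>B\<in>sets M. measure nu B > 0 \<and> (INF x\<in>B. measure (p t0 x) A) > 0"
proof (rule ccontr)
  assume neg: "\<not> ?thesis"
  interpret nu: prob_space nu by fact
  define f where "f t x = measure (p t x) A" for t x
  define R where "R = restrict_space (borel::real measure) {0..}"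
  define L where "L = restrict_space (lborel::real measure) {0..}"
  have gm: "(\<lambda>(t,x). f t x) \<in> borel_measurable (R \<Otimes>\<^sub>M M)"
    using assms(2,7) unfolding transition_prob_def f_def R_def by auto
  have setsLR: "sets L = sets R" unfolding L_def R_def
    by (intro sets_restrict_space_cong) simp
  have sp: "space (L \<Otimes>\<^sub>M nu) = space (R \<Otimes>\<^sub>M M)"
    by (intro sets_eq_imp_space_eq sets_pair_measure_cong setsLR assms(5))
  have gm2: "(\<lambda>(t,x). f t x) \<in> borel_measurable (L \<Otimes>\<^sub>M nu)"
    using gm by (subst measurable_cong_sets[OF sets_pair_measure_cong[OF setsLR assms(5)] refl])
  have fstm: "(\<lambda>z. fst z) \<in> borel_measurable (L \<Otimes>\<^sub>M nu)"
  proof -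
    have "(\<lambda>z::real. z) \<in> borel_measurable L" unfolding L_def
      by (intro measurable_restrict_space1) simp
    then show ?thesis by (rule measurable_compose[OF measurable_fst])
  qed
  have Sm: "{z\<in>space (L \<Otimes>\<^sub>M nu). (\<lambda>t x. t > 0 \<longrightarrow> f t x = 0) (fst z) (snd z)} \<in> sets (L \<Otimes>\<^sub>M nu)"
  proof -
    have "Measurable.pred (L \<Otimes>\<^sub>M nu) (\<lambda>z. fst z > 0 \<longrightarrow> (\<lambda>(t,x). f t x) z = 0)"
      using gm2 fstm by measurable
    then show ?thesis by (simp add: pred_def case_prod_beta)
  qed
  have step1: "AE x in nu. t > 0 \<longrightarrow> f t x = 0" for t :: real
  proof (cases "t > 0")
    case False then show ?thesis by simp
  next
    case True
    have secm: "f t \<in> borel_measurable M"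
    proof -
      have "Pair t \<in> measurable M (R \<Otimes>\<^sub>M M)"
        using True by (intro measurable_Pair1') (simp add: R_def)
      from measurable_compose[OF this gm] show ?thesis by simp
    qed
    define B where "B n = {x\<in>space M. f t x > 1 / (real n + 1)}" for n :: nat
    have Bs: "B n \<in> sets M" for n
      unfolding B_def using secm by measurable
    have B0: "measure nu (B n) = 0" for n
    proof (rule ccontr)
      assume "measure nu (B n) \<noteq> 0"
      then have pos: "measure nu (B n) > 0" using measure_nonneg[of nu "B n"] by linarith
      then have "B n \<noteq> {}" by auto
      then have "(INF x\<in>B n. f t x) \<ge> 1 / (real n + 1)"
        by (intro cINF_greatest) (auto simp: B_def)
      moreover have "1 / (real n + 1) > 0" by simp
      ultimately have "(INF x\<in>B n. measure (p t x) A) > 0" unfolding f_def by linarith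
      with neg True Bs pos show False by blast
    qed
    have "AE x in nu. x \<notin> B n" for n
    proof (rule AE_not_in)
      show "B n \<in> null_sets nu"
        using B0[of n] Bs[of n] assms(5) by (simp add: nu.emeasure_eq_measure null_sets_def)
    qed
    then have "AE x in nu. \<forall>n. x \<notin> B n" by (simp add: AE_all_countable)
    then show ?thesis
    proof (rule AE_mp[OF _ AE_I2], safe)
      fix x assume x: "x \<in> space nu" and H: "\<forall>n. x \<notin> B n"
      have fnn: "f t x \<ge> 0" unfolding f_def by simp
      show "f t x = 0"
      proof (rule ccontr)
        assume "f t x \<noteq> 0"
        then have "f t x > 0" using fnn by linarith
        then obtain n where "inverse (real (Suc n)) < f t x" using reals_Archimedean by blast
        then have "x \<in> B n" using x assms(5) sets_eq_imp_space_eq[OF assms(5)]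
          by (auto simp: B_def field_simps)
        with H show False by blast
      qed
    qed
  qed
  have sfL: "sigma_finite_measure L" unfolding L_def
    by (intro sigma_finite_measure_restrict_space) (auto simp: lborel.sigma_finite_measure_axioms)
  interpret pair_sigma_finite L nu
    using sfL nu.sigma_finite_measure_axioms by (simp add: pair_sigma_finite_def)
  have "AE t in L. AE x in nu. t > 0 \<longrightarrow> f t x = 0"
    using step1 by simp
  then have "AE x in nu. AE t in L. t > 0 \<longrightarrow> f t x = 0"
    using AE_commute[OF Sm] by simp
  then have "AE x in nu. resolvent_ind p A x = 0"
  proof (rule AE_mp[OF _ AE_I2], safe)
    fix x assume "AE t in L. t > 0 \<longrightarrow> f t x = 0"
    then have "AE t in lborel. t \<in> {0..} \<longrightarrow> (t > 0 \<longrightarrow> f t x = 0)"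
      unfolding L_def by (subst (asm) AE_restrict_space_iff) auto
    then have "AE t in lborel. indicator {0..} t *\<^sub>R (exp (- t) * measure (p t x) A) = 0"
      using AE_lborel_singleton[of "0::real"]
      by eventually_elim (auto simp: f_def indicator_def)
    then show "resolvent_ind p A x = 0"
      unfolding resolvent_ind_def set_lebesgue_integral_def by (rule integral_eq_zero_AE)
  qed
  moreover have "AE x in nu. resolvent_ind p A x > 0"
    using absolutely_continuous_AE[OF assms(5,6)] assms(3,7,8) by blast
  ultimately have "AE x in nu. False" by eventually_elim simp
  then show False using nu.AE_False by simp
qed

end
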